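(* Let $q\ge 3$, $r\in\mathbb{N}$ with $r\le q-2$, $s\in\mathbb{N}$, and let $Y_s=\{y_i\}_{i=1}^{2s}$ be any collection of points with $y_{2s}<\cdots<y_1<y_{2s}+2\pi=:y_0$. Then there exists a function $f\in\Delta^{(q)}(Y_s)\cap W^{r}$ such that $$E_n^{(q)}(f,Y_s)\ge C(q,Y_s),\qquad n\in\mathbb{N},$$ where $C(q,Y_s)>0$ depends only on $q$ and $Y_s$.
   Context: A function $f\in C[a,b]$ is called $q$-monotone ($q\ge 2$) if $f\in C^{q-2}(a,b)$ and $f^{(q-2)}$ is convex on $(a,b)$. For $Y_s$ as in the claim, $\Delta^{(q)}(Y_s)$ denotes the set of continuous $2\pi$-periodic functions $f:\mathbb{R}\to\mathbb{R}$ such that $(-1)^{i-1}f$ is $q$-monotone on $[y_i,y_{i-1}]$ for each $1\le i\le 2s$. For $r\in\mathbb{N}$, $W^r$ denotes the class of $2\pi$-periodic functions $f$ with $f^{(r-1)}$ locally absolutely continuous on $\mathbb{R}$ and $\operatorname{ess\,sup}_{x\in\mathbb{R}}|f^{(r)}(x)|\le 2$. $\mathcal{T}_n$ is the space of real trigonometric polynomials of degree $\le n$. For a continuous $2\pi$-periodic $g$, $\|g\|=\max_{x\in\mathbb{R}}|g(x)|$, and $E_n^{(q)}(g,Y_s):=\inf_{T_n\in\mathcal{T}_n\cap\Delta^{(q)}(Y_s)}\|g-T_n\|$. *)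

theory Defs
  imports "HOL-Analysis.Analysis"
begin

definition periodic_2pi :: "(real \<Rightarrow> real) \<Rightarrow> bool" where
  "periodic_2pi f \<longleftrightarrow> (\<forall>x. f (x + 2 * pi) = f x)"

definition deriv_chain :: "nat \<Rightarrow> real set \<Rightarrow> (real \<Rightarrow> real) \<Rightarrow> (nat \<Rightarrow> real \<Rightarrow> real) \<Rightarrow> bool" where
  "deriv_chain k S f g \<longleftrightarrow>
     (\<forall>x\<in>S. g 0 x = f x) \<and>
     (\<forall>j<k. \<forall>x\<in>S. (g j has_real_derivative g (Suc j) x) (at x)) \<and>
     continuous_on S (g k)"

definition q_monotone :: "nat \<Rightarrow> real \<Rightarrow> real \<Rightarrow> (real \<Rightarrow> real) \<Rightarrow> bool" where
  "q_monotone q a b f \<longleftrightarrow>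
     continuous_on {a..b} f \<and>
     (\<exists>g. deriv_chain (q - 2) {a<..<b} f g \<and> convex_on {a<..<b} (g (q - 2)))"

text \<open>Delta^(q)(Y_s), with the points given as y 0, ..., y (2s).\<close>
definition Delta_q :: "nat \<Rightarrow> nat \<Rightarrow> (nat \<Rightarrow> real) \<Rightarrow> (real \<Rightarrow> real) \<Rightarrow> bool" where
  "Delta_q q s y f \<longleftrightarrow>
     continuous_on UNIV f \<and> periodic_2pi f \<and>
     (\<forall>i\<in>{1 .. 2 * s}. q_monotone q (y i) (y (i - 1)) (\<lambda>x. (-1) ^ (i - 1) * f x))"

definition abs_cont_on :: "real \<Rightarrow> real \<Rightarrow> (real \<Rightarrow> real) \<Rightarrow> bool" where
  "abs_cont_on a b g \<longleftrightarrow>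
     (\<forall>\<epsilon>>0. \<exists>\<delta>>0. \<forall>(n::nat) (u::nat \<Rightarrow> real) (v::nat \<Rightarrow> real).
        (\<forall>k<n. a \<le> u k \<and> u k \<le> v k \<and> v k \<le> b) \<and>
        (\<forall>i<n. \<forall>j<n. i \<noteq> j \<longrightarrow> v i \<le> u j \<or> v j \<le> u i) \<and>
        (\<Sum>k<n. v k - u k) < \<delta>
        \<longrightarrow> (\<Sum>k<n. \<bar>g (v k) - g (u k)\<bar>) < \<epsilon>)"

definition locally_abs_cont :: "(real \<Rightarrow> real) \<Rightarrow> bool" where
  "locally_abs_cont g \<longleftrightarrow> (\<forall>a b. abs_cont_on a b g)"

definition W_class :: "nat \<Rightarrow> (real \<Rightarrow> real) \<Rightarrow> bool" where
  "W_class r f \<longleftrightarrow> periodic_2pi f \<and>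
     (\<exists>g. (\<forall>x. g 0 x = f x) \<and>
          (\<forall>j<r - 1. \<forall>x. (g j has_real_derivative g (Suc j) x) (at x)) \<and>
          locally_abs_cont (g (r - 1)) \<and>
          (AE x in lborel. \<exists>D. (g (r - 1) has_real_derivative D) (at x) \<and> \<bar>D\<bar> \<le> 2))"

definition trig_poly :: "nat \<Rightarrow> (real \<Rightarrow> real) \<Rightarrow> bool" where
  "trig_poly n T \<longleftrightarrow> (\<exists>(a::nat \<Rightarrow> real) (b::nat \<Rightarrow> real).
     \<forall>x. T x = a 0 + (\<Sum>k=1..n. a k * cos (real k * x) + b k * sin (real k * x)))"

definition sup_norm :: "(real \<Rightarrow> real) \<Rightarrow> real" where
  "sup_norm g = Sup (range (\<lambda>x. \<bar>g x\<bar>))"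

definition E_q :: "nat \<Rightarrow> nat \<Rightarrow> nat \<Rightarrow> (nat \<Rightarrow> real) \<Rightarrow> (real \<Rightarrow> real) \<Rightarrow> real" where
  "E_q n q s y g = Inf {sup_norm (\<lambda>x. g x - T x) | T. trig_poly n T \<and> Delta_q q s y T}"

end

theory Submission
  imports Defs
begin


fun Lop :: "real \<Rightarrow> real \<Rightarrow> nat \<Rightarrow> (real \<Rightarrow> real) \<Rightarrow> real \<Rightarrow> real" where
  "Lop d a 0 g x = g (x + 2*d) - 2 * g (x + d) + 2 * g (x - d) - g (x - 2*d)"
| "Lop d a (Suc k) g x = Lop d a k g (x + a/2) - Lop d a k g (x - a/2)"

lemma Lop_deriv:
  assumes "\<And>x. (g has_real_derivative g' x) (at x)"
  shows "(Lop d a k g has_real_derivative Lop d a k g' x) (at x)"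
proof (induction k arbitrary: x)
  case 0
  have s: "\<And>c. ((\<lambda>x. g (x + c)) has_real_derivative g' (x + c)) (at x)"
    using assms DERIV_shift by blast
  show ?case
    using s[of "2*d"] s[of d] s[of "-d"] s[of "-2*d"]
    by (auto intro!: derivative_eq_intros)
next
  case (Suc k)
  have s: "\<And>c. ((\<lambda>x. Lop d a k g (x + c)) has_real_derivative Lop d a k g' (x + c)) (at x)"
    using Suc DERIV_shift by blast
  show ?case using s[of "a/2"] s[of "-a/2"]
    by (auto intro!: derivative_eq_intros)
qed

lemma Lop_diff: "Lop d a k (\<lambda>x. f x - g x) x = Lop d a k f x - Lop d a k g x"
  by (induction k arbitrary: x) (auto simp: algebra_simps)

lemma Lop_cmult: "Lop d a k (\<lambda>x. c * f x) x = c * Lop d a k f x"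
  by (induction k arbitrary: x) (auto simp: algebra_simps)

lemma Lop_const: "Lop d a k (\<lambda>x. f x + c) x = Lop d a k f x"
  by (induction k arbitrary: x) (auto simp: algebra_simps)

lemma Lop_bound:
  assumes "\<And>x. \<bar>g x\<bar> \<le> M"
  shows "\<bar>Lop d a k g x\<bar> \<le> 6 * 2^k * M"
proof (induction k arbitrary: x)
  case 0
  show ?case using assms[of "x+2*d"] assms[of "x+d"] assms[of "x-d"] assms[of "x-2*d"] by simp
next
  case (Suc k)
  show ?case using Suc[of "x+a/2"] Suc[of "x-a/2"] by simp
qed



lemma spread:
  fixes H :: "real \<Rightarrow> real"
  assumes "convex_on S H" "a \<in> S" "b \<in> S" "a \<le> x" "x \<le> b"
  shows "H x + H (a + b - x) \<le> H a + H b"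
proof (cases "a = b")
  case True then show ?thesis using assms by auto
next
  case False
  then have ab: "a < b" using assms by auto
  define t where "t = (x - a) / (b - a)"
  have t0: "t \<ge> 0" "t \<le> 1" using assms ab by (auto simp: t_def field_simps)
  have tt: "t * (b - a) = x - a" using ab by (simp add: t_def)
  have x: "x = (1 - t) *\<^sub>R a + t *\<^sub>R b" using tt by (simp add: algebra_simps)
  have y: "a + b - x = (1 - (1 - t)) *\<^sub>R a + (1 - t) *\<^sub>R b" using tt by (simp add: algebra_simps)
  have 1: "H x \<le> (1 - t) * H a + t * H b"
    using convex_onD[OF assms(1) t0 assms(2,3)] x by simp
  have 2: "H (a + b - x) \<le> (1 - (1-t)) * H a + (1-t) * H b"
    using convex_onD[OF assms(1), of "1-t" a b] t0 assms(2,3) y by simp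
  show ?thesis using 1 2 by (simp add: algebra_simps)
qed

lemma base_T:
  fixes H :: "real \<Rightarrow> real"
  assumes cv: "convex_on {y..y+3*d} H" and cc: "concave_on {y-3*d..y} H"
    and d: "d > 0" and u: "\<bar>u\<bar> \<le> d"
  shows "Lop d a 0 H (y+u) + Lop d a 0 H (y-u) \<ge> 0"
proof -
  define v where "v = \<bar>u\<bar>"
  have v: "0 \<le> v" "v \<le> d" using u by (auto simp: v_def)
  have sym: "Lop d a 0 H (y+u) + Lop d a 0 H (y-u) = Lop d a 0 H (y+v) + Lop d a 0 H (y-v)"
    by (cases "u \<ge> 0") (auto simp: v_def)
  have r1: "H (y+d+v) + H (y+d-v) \<le> H y + H (y+2*d)"
    using spread[OF cv, of y "y+2*d" "y+d+v"] v d by (auto simp: algebra_simps)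
  have r2: "H (y+2*d) + H (y+2*d) \<le> H (y+2*d-v) + H (y+2*d+v)"
    using spread[OF cv, of "y+2*d-v" "y+2*d+v" "y+2*d"] v d by (auto simp: algebra_simps)
  have cv': "convex_on {y-3*d..y} (\<lambda>x. - H x)" using cc by (simp add: concave_on_def)
  have l1: "- H (y-d+v) + - H (y-d-v) \<le> - H (y-2*d) + - H y"
    using spread[OF cv', of "y-2*d" y "y-d+v"] v d by (auto simp: algebra_simps)
  have l2: "- H (y-2*d) + - H (y-2*d) \<le> - H (y-2*d-v) + - H (y-2*d+v)"
    using spread[OF cv', of "y-2*d-v" "y-2*d+v" "y-2*d"] v d by (auto simp: algebra_simps)
  show ?thesis unfolding sym using r1 r2 l1 l2 by (simp add: algebra_simps)
qed

lemma step_T: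
  assumes der: "\<And>x. (G has_real_derivative G' x) (at x)" and a: "a \<ge> 0"
    and hyp: "\<And>t. \<bar>t\<bar> \<le> \<sigma> \<Longrightarrow> Lop d a k G' (y+t) + Lop d a k G' (y-t) \<ge> 0"
    and s: "\<bar>s\<bar> \<le> \<sigma> - a/2"
  shows "Lop d a (Suc k) G (y+s) + Lop d a (Suc k) G (y-s) \<ge> 0"
proof -
  define \<Phi> where "\<Phi> t = Lop d a k G (y+t) - Lop d a k G (y-t)" for t
  have dL: "\<And>x. (Lop d a k G has_real_derivative Lop d a k G' x) (at x)"
    using Lop_deriv[OF der] .
  have dP: "(\<Phi> has_real_derivative Lop d a k G' (y+t) + Lop d a k G' (y-t)) (at t)" for t
  proof -
    have 1: "((\<lambda>t. Lop d a k G (y+t)) has_real_derivative Lop d a k G' (y+t)) (at t)"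
      using DERIV_shift[of "Lop d a k G" "Lop d a k G' (y+t)" t y] dL by (simp add: add.commute)
    have 2: "((\<lambda>t. Lop d a k G (y-t)) has_real_derivative Lop d a k G' (y-t) * (-1)) (at t)"
      by (rule DERIV_chain2[OF dL]) (auto intro!: derivative_eq_intros)
    show ?thesis unfolding \<Phi>_def using DERIV_diff[OF 1 2] by simp
  qed
  have "\<Phi> (s - a/2) \<le> \<Phi> (s + a/2)"
  proof (rule DERIV_nonneg_imp_nondecreasing[of "s - a/2" "s + a/2" \<Phi>])
    show "s - a/2 \<le> s + a/2" using a by simp
    fix x assume "s - a/2 \<le> x" "x \<le> s + a/2"
    then have "\<bar>x\<bar> \<le> \<sigma>" using s by auto
    then show "\<exists>y'. (\<Phi> has_real_derivative y') (at x) \<and> 0 \<le> y'"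
      using dP hyp by blast
  qed
  then show ?thesis by (simp add: \<Phi>_def algebra_simps)
qed

lemma convex_on_closed:
  fixes H :: "real \<Rightarrow> real"
  assumes lr: "l < r" and cv: "convex_on {l<..<r} H" and ct: "continuous_on {l..r} H"
  shows "convex_on {l..r} H"
proof (rule convex_onI)
  show "convex {l..r}" by simp
  fix t x y :: real assume t: "0 < t" "t < 1" and x: "x \<in> {l..r}" and y: "y \<in> {l..r}"
  define m where "m = (l + r) / 2"
  define c where "c z e = (1 - e) * z + e * m" for z e :: real
  have cin: "c z e \<in> {l<..<r}" if "z \<in> {l..r}" "0 < e" "e \<le> 1" for z e
  proof -
    have "c z e = z + e * (m - z)" by (simp add: c_def algebra_simps)
    moreover have "l < z + e * (m - z)"
    proof (cases "z = l")
      case True then show ?thesis using that lr by (simp add: m_def)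
    next
      case False
      then have "l < z" using that by auto
      moreover have "e * (m - z) > - (e * (z - l))"
      proof -
        have "e * (m - l) > 0" using that lr by (simp add: m_def)
        then show ?thesis by (simp add: algebra_simps)
      qed
      moreover have "e * (z - l) \<le> 1 * (z - l)" using that \<open>l<z\<close> by (intro mult_right_mono) auto
      ultimately show ?thesis by (smt (verit))
    qed
    moreover have "z + e * (m - z) < r"
    proof (cases "z = r")
      case True then show ?thesis using that lr by (simp add: m_def mult_pos_neg)
    next
      case False
      then have "z < r" using that by auto
      moreover have "e * (m - z) < e * (r - z)"
      proof -
        have "e * (r - m) > 0" using that lr by (simp add: m_def)
        then show ?thesis by (simp add: algebra_simps)
      qed
      moreover have "e * (r - z) \<le> 1 * (r - z)" using that \<open>z<r\<close> by (intro mult_right_mono) auto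
      ultimately show ?thesis by (smt (verit))
    qed
    ultimately show ?thesis by simp
  qed
  have cc: "c ((1 - t) * x + t * y) e = (1 - t) * c x e + t * c y e" for e
    by (simp add: c_def algebra_simps)
  define \<Phi> where "\<Phi> e = (1 - t) * H (c x e) + t * H (c y e) - H (c ((1 - t) * x + t * y) e)" for e
  have xy: "(1 - t) * x + t * y \<in> {l..r}"
  proof -
    have "(1-t)*l \<le> (1-t)*x" "(1-t)*x \<le> (1-t)*r" "t*l \<le> t*y" "t*y \<le> t*r"
      using x y t by (auto intro: mult_left_mono)
    moreover have "(1-t)*l + t*l = l" "(1-t)*r + t*r = r" by (simp_all add: algebra_simps)
    ultimately show ?thesis by auto
  qed
  have cont: "continuous_on {0..1} \<Phi>"
  proof -
    have "continuous_on {0..1} (\<lambda>e. H (c z e))" if "z \<in> {l..r}" for z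
    proof (rule continuous_on_compose2[OF ct])
      show "continuous_on {0..1} (\<lambda>e. c z e)" by (auto simp: c_def intro!: continuous_intros)
      show "(\<lambda>e. c z e) ` {0..1} \<subseteq> {l..r}"
      proof
        fix w assume "w \<in> (\<lambda>e. c z e) ` {0..1}"
        then obtain e where e: "e \<in> {0..1}" "w = c z e" by auto
        show "w \<in> {l..r}"
        proof (cases "e = 0")
          case True then show ?thesis using e that by (simp add: c_def)
        next
          case False then show ?thesis using cin[OF that, of e] e by auto
        qed
      qed
    qed
    then show ?thesis unfolding \<Phi>_def using x y xy by (auto intro!: continuous_intros)
  qed
  have pos: "\<Phi> e \<ge> 0" if "0 < e" "e \<le> 1" for e
  proof -
    have "H ((1 - t) *\<^sub>R c x e + t *\<^sub>R c y e) \<le> (1 - t) * H (c x e) + t * H (c y e)"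
      using convex_onD[OF cv, of t "c x e" "c y e"] cin x y that t by auto
    then show ?thesis unfolding \<Phi>_def cc by simp
  qed
  have lim: "(\<Phi> \<longlongrightarrow> \<Phi> 0) (at 0 within {0<..1})"
  proof -
    have "(\<Phi> \<longlongrightarrow> \<Phi> 0) (at 0 within {0..1})" using cont by (auto simp: continuous_on_def)
    then show ?thesis by (rule tendsto_within_subset) auto
  qed
  have "\<Phi> 0 \<ge> 0"
  proof (rule tendsto_lowerbound[OF lim])
    show "\<forall>\<^sub>F e in at 0 within {0<..1}. 0 \<le> \<Phi> e"
      using pos by (auto simp: eventually_at_filter)
    show "at 0 within {0<..1::real} \<noteq> bot"
      by (simp add: at_within_eq_bot_iff)
  qed
  then show "H ((1 - t) *\<^sub>R x + t *\<^sub>R y) \<le> (1 - t) * H x + t * H y"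
    by (simp add: \<Phi>_def c_def)
qed



definition TD :: "(nat \<Rightarrow> real) \<Rightarrow> (nat \<Rightarrow> real) \<Rightarrow> nat \<Rightarrow> nat \<Rightarrow> real \<Rightarrow> real" where
  "TD a b n j x = (if j = 0 then a 0 else 0) +
     (\<Sum>k=1..n. real k ^ j * (a k * cos (real k * x + real j * pi / 2) + b k * sin (real k * x + real j * pi / 2)))"

lemma cos_shift_half: "cos (t + real (Suc j) * pi / 2) = - sin (t + real j * pi / 2)"
proof -
  have "t + real (Suc j) * pi / 2 = (t + real j * pi / 2) + pi/2" by (simp add: algebra_simps)
  moreover have "cos ((t + real j * pi / 2) + pi/2) = - sin (t + real j * pi / 2)"
    using cos_add[of "t + real j * pi / 2" "pi/2"] by simp
  ultimately show ?thesis by metis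
qed

lemma sin_shift_half: "sin (t + real (Suc j) * pi / 2) = cos (t + real j * pi / 2)"
proof -
  have "t + real (Suc j) * pi / 2 = (t + real j * pi / 2) + pi/2" by (simp add: algebra_simps)
  moreover have "sin ((t + real j * pi / 2) + pi/2) = cos (t + real j * pi / 2)"
    using sin_add[of "t + real j * pi / 2" "pi/2"] by simp
  ultimately show ?thesis by metis
qed

lemma TD_deriv: "(TD a b n j has_real_derivative TD a b n (Suc j) x) (at x)"
proof -
  have tm: "((\<lambda>x. real k ^ j * (a k * cos (real k * x + real j * pi / 2) + b k * sin (real k * x + real j * pi / 2)))
     has_real_derivative
      real k ^ Suc j * (a k * cos (real k * x + real (Suc j) * pi / 2) + b k * sin (real k * x + real (Suc j) * pi / 2))) (at x)" for k
    unfolding cos_shift_half sin_shift_half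
    by (auto intro!: derivative_eq_intros simp: algebra_simps)
  have "((\<lambda>x. \<Sum>k=1..n. real k ^ j * (a k * cos (real k * x + real j * pi / 2) + b k * sin (real k * x + real j * pi / 2)))
     has_real_derivative (\<Sum>k=1..n. real k ^ Suc j * (a k * cos (real k * x + real (Suc j) * pi / 2) + b k * sin (real k * x + real (Suc j) * pi / 2)))) (at x)"
    by (rule DERIV_sum) (rule tm)
  from DERIV_add[OF DERIV_const[of "if j = 0 then a 0 else 0"] this]
  show ?thesis unfolding TD_def by simp
qed

lemma TD_0: "trig_poly n T \<Longrightarrow> \<exists>a b. T = TD a b n 0"
  unfolding trig_poly_def TD_def by (auto simp: fun_eq_iff)

lemma chain_id:
  assumes ch: "deriv_chain m S f g" and S: "open S"
    and f: "\<And>x. x \<in> S \<Longrightarrow> f x = D 0 x"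
    and D: "\<And>j x. (D j has_real_derivative D (Suc j) x) (at x)"
  shows "j \<le> m \<Longrightarrow> x \<in> S \<Longrightarrow> g j x = D j x"
proof (induction j arbitrary: x)
  case 0 then show ?case using ch f by (simp add: deriv_chain_def)
next
  case (Suc j)
  have "(g j has_real_derivative g (Suc j) x) (at x)" using ch Suc.prems by (simp add: deriv_chain_def)
  then have "(D j has_real_derivative g (Suc j) x) (at x)"
    by (rule has_field_derivative_transform_within_open[OF _ S Suc.prems(2)]) (use Suc in auto)
  then show ?case using D DERIV_unique by blast
qed

lemma convex_on_eq: "convex_on S g \<Longrightarrow> (\<And>x. x \<in> S \<Longrightarrow> g x = h x) \<Longrightarrow> convex_on S h"
  unfolding convex_on_def by (metis convex_def)



lemma periodic_nat: "periodic_2pi g \<Longrightarrow> g (x + 2*pi*real k) = g x"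
proof (induction k arbitrary: x)
  case 0 then show ?case by simp
next
  case (Suc k)
  have "g (x + 2*pi*real (Suc k)) = g ((x + 2*pi*real k) + 2*pi)" by (simp add: algebra_simps)
  also have "\<dots> = g (x + 2*pi*real k)" using Suc.prems by (simp add: periodic_2pi_def)
  finally show ?case using Suc by simp
qed

lemma periodic_int: "periodic_2pi g \<Longrightarrow> g (x + 2*pi* of_int k) = g x"
proof (cases "k \<ge> 0")
  case True
  assume p: "periodic_2pi g"
  then show ?thesis using periodic_nat[OF p, of x "nat k"] True by simp
next
  case False
  assume p: "periodic_2pi g"
  have "g ((x + 2*pi* of_int k) + 2*pi*real (nat (-k))) = g (x + 2*pi* of_int k)"
    by (rule periodic_nat[OF p])
  moreover have "(x + 2*pi* of_int k) + 2*pi*real (nat (-k)) = x" using False by simp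
  ultimately show ?thesis by simp
qed

lemma periodic_bounded:
  assumes c: "continuous_on UNIV g" and p: "periodic_2pi g"
  shows "\<exists>M. \<forall>x. \<bar>g x\<bar> \<le> M"
proof -
  have "compact (g ` {0..2*pi})"
    by (rule compact_continuous_image) (use c continuous_on_subset in auto)
  then obtain M where M: "\<And>z. z \<in> g ` {0..2*pi} \<Longrightarrow> norm z \<le> M"
    using compact_imp_bounded bounded_iff by metis
  have "\<bar>g x\<bar> \<le> M" for x
  proof -
    define k where "k = \<lfloor>x / (2*pi)\<rfloor>"
    define x' where "x' = x - 2*pi* of_int k"
    have "of_int k \<le> x / (2*pi)" "x / (2*pi) < of_int k + 1" unfolding k_def by linarith+
    then have "2*pi* of_int k \<le> x" "x < 2*pi* of_int k + 2*pi"
      by (simp_all add: field_simps)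
    then have "x' \<in> {0..2*pi}" by (simp add: x'_def)
    moreover have "g x = g x'" using periodic_int[OF p, of x' k] by (simp add: x'_def)
    ultimately show ?thesis using M by auto
  qed
  then show ?thesis by blast
qed

lemma periodic_antideriv:
  assumes c: "continuous_on UNIV G" and p: "periodic_2pi G"
  shows "\<exists>B \<kappa>. (\<forall>x. (B has_real_derivative G x - \<kappa>) (at x)) \<and> periodic_2pi B"
proof -
  have "\<exists>F. \<forall>x :: real. -\<infinity> < x \<longrightarrow> x < \<infinity> \<longrightarrow> (F has_vector_derivative G x) (at x)"
    by (rule einterval_antiderivative) (use c in \<open>auto simp: continuous_on_eq_continuous_at\<close>)
  then obtain F where F: "\<And>x. (F has_real_derivative G x) (at x)"
    by (auto simp: has_real_derivative_iff_has_vector_derivative)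
  define \<Delta> where "\<Delta> x = F (x + 2*pi) - F x" for x
  have dD: "(\<Delta> has_real_derivative 0) (at x)" for x
  proof -
    have "((\<lambda>x. F (x + 2*pi)) has_real_derivative G (x + 2*pi)) (at x)"
      using F DERIV_shift by blast
    then have "(\<Delta> has_real_derivative G (x + 2*pi) - G x) (at x)"
      unfolding \<Delta>_def by (intro DERIV_diff F)
    then show ?thesis using p by (simp add: periodic_2pi_def)
  qed
  have Dc: "\<Delta> x = \<Delta> 0" for x using DERIV_isconst_all dD by blast
  define \<kappa> where "\<kappa> = \<Delta> 0 / (2*pi)"
  define B where "B x = F x - \<kappa> * x" for x
  have "(B has_real_derivative G x - \<kappa>) (at x)" for x
    unfolding B_def using F by (auto intro!: derivative_eq_intros)
  moreover have "periodic_2pi B"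
    unfolding periodic_2pi_def
  proof
    fix x
    have "B (x + 2*pi) - B x = \<Delta> x - 2*pi*\<kappa>" by (simp add: B_def \<Delta>_def algebra_simps)
    also have "\<dots> = 0" using Dc by (simp add: \<kappa>_def)
    finally show "B (x + 2*pi) = B x" by simp
  qed
  ultimately show ?thesis by blast
qed

lemma cont_of_deriv': "(\<And>x. (H has_real_derivative H' x) (at x)) \<Longrightarrow> continuous_on S H"
  by (meson DERIV_continuous continuous_at_imp_continuous_on)

lemma chain_exists:
  "continuous_on UNIV G \<Longrightarrow> periodic_2pi G \<Longrightarrow>
   \<exists>F c. F m = (\<lambda>x. G x + c) \<and> (\<forall>j<m. \<forall>x. (F j has_real_derivative F (Suc j) x) (at x)) \<and>
     (\<forall>j\<le>m. periodic_2pi (F j) \<and> continuous_on UNIV (F j))"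
proof (induction m arbitrary: G)
  case 0
  then show ?case by (rule_tac x="\<lambda>j. G" in exI, rule_tac x=0 in exI) auto
next
  case (Suc m)
  obtain B \<kappa> where B: "\<And>x. (B has_real_derivative G x - \<kappa>) (at x)" "periodic_2pi B"
    using periodic_antideriv[OF Suc.prems] by blast
  have Bc: "continuous_on UNIV B" using cont_of_deriv'[OF B(1)] .
  obtain F c where F: "F m = (\<lambda>x. B x + c)" "\<forall>j<m. \<forall>x. (F j has_real_derivative F (Suc j) x) (at x)"
     "\<forall>j\<le>m. periodic_2pi (F j) \<and> continuous_on UNIV (F j)"
    using Suc.IH[OF Bc B(2)] by blast
  define F' where "F' j = (if j \<le> m then F j else (\<lambda>x. G x - \<kappa>))" for j
  have "F' (Suc m) = (\<lambda>x. G x + (- \<kappa>))" by (simp add: F'_def)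
  moreover have "\<forall>j<Suc m. \<forall>x. (F' j has_real_derivative F' (Suc j) x) (at x)"
  proof (intro allI impI)
    fix j x assume j: "j < Suc m"
    show "(F' j has_real_derivative F' (Suc j) x) (at x)"
    proof (cases "j < m")
      case True then show ?thesis using F(2) by (simp add: F'_def)
    next
      case False
      then have "j = m" using j by simp
      then show ?thesis using F(1) B(1)[of x] by (auto simp: F'_def intro!: derivative_eq_intros)
    qed
  qed
  moreover have "\<forall>j\<le>Suc m. periodic_2pi (F' j) \<and> continuous_on UNIV (F' j)"
  proof (intro allI impI)
    fix j assume j: "j \<le> Suc m"
    show "periodic_2pi (F' j) \<and> continuous_on UNIV (F' j)"
    proof (cases "j \<le> m")
      case True then show ?thesis using F(3) by (simp add: F'_def)
    next
      case False
      then show ?thesis using Suc.prems by (auto simp: F'_def periodic_2pi_def intro!: continuous_intros)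
    qed
  qed
  ultimately show ?case by blast
qed

lemma lipschitz_abs_cont:
  assumes L: "\<And>x z. \<bar>g x - g z\<bar> \<le> L * \<bar>x - z\<bar>" and L0: "L \<ge> 0"
  shows "locally_abs_cont g"
  unfolding locally_abs_cont_def abs_cont_on_def
proof (intro allI impI)
  fix a b \<epsilon> :: real assume e: "\<epsilon> > 0"
  show "\<exists>\<delta>>0. \<forall>(n::nat) u v. (\<forall>k<n. a \<le> u k \<and> u k \<le> v k \<and> v k \<le> b) \<and>
          (\<forall>i<n. \<forall>j<n. i \<noteq> j \<longrightarrow> v i \<le> u j \<or> v j \<le> u i) \<and> (\<Sum>k<n. v k - u k) < \<delta> \<longrightarrow>
          (\<Sum>k<n. \<bar>g (v k) - g (u k)\<bar>) < \<epsilon>"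
  proof (intro exI conjI allI impI)
    show "\<epsilon> / (L + 1) > 0" using e L0 by simp
    fix n :: nat and u v :: "nat \<Rightarrow> real"
    assume H: "(\<forall>k<n. a \<le> u k \<and> u k \<le> v k \<and> v k \<le> b) \<and>
          (\<forall>i<n. \<forall>j<n. i \<noteq> j \<longrightarrow> v i \<le> u j \<or> v j \<le> u i) \<and> (\<Sum>k<n. v k - u k) < \<epsilon> / (L + 1)"
    have "(\<Sum>k<n. \<bar>g (v k) - g (u k)\<bar>) \<le> (\<Sum>k<n. L * (v k - u k))"
    proof (rule sum_mono)
      fix k assume "k \<in> {..<n}"
      then have "u k \<le> v k" using H by auto
      then show "\<bar>g (v k) - g (u k)\<bar> \<le> L * (v k - u k)" using L[of "v k" "u k"] by simp
    qed
    also have "\<dots> = L * (\<Sum>k<n. v k - u k)" by (simp add: sum_distrib_left)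
    also have "\<dots> \<le> L * (\<epsilon> / (L + 1))" using H L0 by (intro mult_left_mono) auto
    also have "\<dots> < \<epsilon>"
    proof -
      have "L * (\<epsilon> / (L + 1)) = \<epsilon> * (L / (L + 1))" by simp
      also have "\<dots> < \<epsilon> * 1" using e L0 by (intro mult_strict_left_mono) auto
      finally show ?thesis by simp
    qed
    finally show "(\<Sum>k<n. \<bar>g (v k) - g (u k)\<bar>) < \<epsilon>" .
  qed
qed



definition xi :: "real \<Rightarrow> real \<Rightarrow> real" where
  "xi al x = x - 2*pi * of_int \<lfloor>(x - al) / (2*pi)\<rfloor>"

definition psi0 :: "real \<Rightarrow> real \<Rightarrow> real \<Rightarrow> real \<Rightarrow> real" where
  "psi0 al y1 y0 x = max (- ((y0 - y1) / (y1 - al)) * (x - al)) (x - y0)"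

definition psi :: "real \<Rightarrow> real \<Rightarrow> real \<Rightarrow> real \<Rightarrow> real" where
  "psi al y1 y0 x = psi0 al y1 y0 (xi al x)"

lemma xi_range: "al \<le> xi al x \<and> xi al x < al + 2*pi"
proof -
  define k where "k = \<lfloor>(x - al) / (2*pi)\<rfloor>"
  have "of_int k \<le> (x - al) / (2*pi)" "(x - al) / (2*pi) < of_int k + 1" unfolding k_def by linarith+
  then have "2*pi * of_int k \<le> x - al" "x - al < 2*pi * of_int k + 2*pi"
    by (simp_all add: field_simps)
  then show ?thesis by (simp add: xi_def k_def[symmetric])
qed

lemma xi_shift: "xi al (x + 2*pi * of_int k) = xi al x"
proof -
  have "(x + 2*pi * of_int k - al) / (2*pi) = (x - al) / (2*pi) + of_int k"
    by (simp add: field_simps)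
  then have "\<lfloor>(x + 2*pi * of_int k - al) / (2*pi)\<rfloor> = \<lfloor>(x - al) / (2*pi)\<rfloor> + k"
    by simp
  then show ?thesis by (simp add: xi_def algebra_simps)
qed

lemma xi_id: "al \<le> x \<Longrightarrow> x < al + 2*pi \<Longrightarrow> xi al x = x"
proof -
  assume h: "al \<le> x" "x < al + 2*pi"
  have "0 \<le> (x - al) / (2*pi)" "(x - al) / (2*pi) < 1" using h by (simp_all add: field_simps)
  then have "\<lfloor>(x - al) / (2*pi)\<rfloor> = 0" by (simp add: floor_eq_iff)
  then show ?thesis by (simp add: xi_def)
qed

lemma xi_decomp: "\<exists>k. x = xi al x + 2*pi * of_int k"
  by (rule exI[of _ "\<lfloor>(x - al) / (2*pi)\<rfloor>"]) (simp add: xi_def)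

locale psi_setup =
  fixes al y1 y0 :: real
  assumes a1: "al < y1" and y10: "y1 < y0" and per: "y0 = al + 2*pi"
begin

definition "cc = (y0 - y1) / (y1 - al)"

lemma cc_pos: "cc > 0" using a1 y10 by (simp add: cc_def)

lemma cc_y1: "cc * (y1 - al) = y0 - y1" using a1 by (simp add: cc_def)

lemma psi0_left: "x \<le> y1 \<Longrightarrow> psi0 al y1 y0 x = - cc * (x - al)"
proof -
  assume x: "x \<le> y1"
  have "- cc * (x - al) - (x - y0) = (cc + 1) * (y1 - x)"
    using cc_y1 by (simp add: algebra_simps)
  moreover have "(cc + 1) * (y1 - x) \<ge> 0" using cc_pos x by simp
  ultimately show ?thesis unfolding psi0_def cc_def[symmetric] by simp
qed

lemma psi0_right: "y1 \<le> x \<Longrightarrow> psi0 al y1 y0 x = x - y0"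
proof -
  assume x: "y1 \<le> x"
  have "- cc * (x - al) - (x - y0) = (cc + 1) * (y1 - x)"
    using cc_y1 by (simp add: algebra_simps)
  moreover have "(cc + 1) * (y1 - x) \<le> 0" using cc_pos x by (simp add: mult_nonneg_nonpos)
  ultimately show ?thesis unfolding psi0_def cc_def[symmetric] by simp
qed

lemma psi0_al: "psi0 al y1 y0 al = 0" using psi0_left a1 by simp
lemma psi0_y0: "psi0 al y1 y0 y0 = 0" using psi0_right y10 by simp

lemma psi_eq: "al \<le> x \<Longrightarrow> x \<le> y0 \<Longrightarrow> psi al y1 y0 x = psi0 al y1 y0 x"
proof -
  assume h: "al \<le> x" "x \<le> y0"
  show ?thesis
  proof (cases "x = y0")
    case True
    have "xi al y0 = xi al (al + 2*pi * of_int 1)" using per by simp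
    also have "\<dots> = xi al al" by (rule xi_shift)
    also have "\<dots> = al" by (rule xi_id) auto
    finally show ?thesis using True psi0_al psi0_y0 by (simp add: psi_def)
  next
    case False
    then show ?thesis using h per xi_id by (simp add: psi_def)
  qed
qed

definition "LL = max 1 cc"

lemma psi0_lip: "\<bar>psi0 al y1 y0 x - psi0 al y1 y0 z\<bar> \<le> LL * \<bar>x - z\<bar>"
proof -
  have A: "\<bar>- cc * (x - al) - - cc * (z - al)\<bar> \<le> LL * \<bar>x - z\<bar>"
  proof -
    have e1: "- cc * (x - al) - - cc * (z - al) = cc * (z - x)" by (simp add: algebra_simps)
    have "\<bar>- cc * (x - al) - - cc * (z - al)\<bar> = cc * \<bar>x - z\<bar>"
      unfolding e1 using cc_pos by (simp add: abs_mult abs_minus_commute)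
    also have "\<dots> \<le> LL * \<bar>x - z\<bar>" by (intro mult_right_mono) (auto simp: LL_def)
    finally show ?thesis .
  qed
  have B: "\<bar>(x - y0) - (z - y0)\<bar> \<le> LL * \<bar>x - z\<bar>"
  proof -
    have "\<bar>(x - y0) - (z - y0)\<bar> = 1 * \<bar>x - z\<bar>" by simp
    also have "\<dots> \<le> LL * \<bar>x - z\<bar>" by (intro mult_right_mono) (auto simp: LL_def)
    finally show ?thesis .
  qed
  show ?thesis using A B unfolding psi0_def cc_def[symmetric] by (auto simp: max_def abs_le_iff)
qed

lemma LL_pos: "LL \<ge> 1" by (simp add: LL_def)

lemma psi_periodic: "periodic_2pi (psi al y1 y0)"
  unfolding periodic_2pi_def psi_def using xi_shift[of al _ 1] by simp

lemma psi_shift: "psi al y1 y0 (x + 2*pi * of_int k) = psi al y1 y0 x"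
  unfolding psi_def using xi_shift by simp

lemma psi_lip_le:
  assumes xz: "x \<le> z"
  shows "\<bar>psi al y1 y0 x - psi al y1 y0 z\<bar> \<le> LL * \<bar>x - z\<bar>"
proof -
  define k1 where "k1 = \<lfloor>(x - al) / (2*pi)\<rfloor>"
  define k2 where "k2 = \<lfloor>(z - al) / (2*pi)\<rfloor>"
  have k12: "k1 \<le> k2" unfolding k1_def k2_def
    by (intro floor_mono divide_right_mono) (use xz in auto)
  have xx: "xi al x = x - 2*pi * of_int k1" and zz: "xi al z = z - 2*pi * of_int k2"
    by (simp_all add: xi_def k1_def k2_def)
  have rx: "al \<le> xi al x" "xi al x < al + 2*pi" and rz: "al \<le> xi al z" "xi al z < al + 2*pi"
    using xi_range by auto
  show ?thesis
  proof (cases "k1 = k2")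
    case True
    then have "xi al x - xi al z = x - z" using xx zz by simp
    then show ?thesis using psi0_lip[of "xi al x" "xi al z"] by (simp add: psi_def)
  next
    case False
    then have "k1 + 1 \<le> k2" using k12 by simp
    then have "2*pi * of_int (k1 + 1) \<le> 2*pi * of_int k2" by simp
    then have kk: "2*pi * of_int k1 + 2*pi \<le> 2*pi * of_int k2" by (simp add: algebra_simps)
    have "\<bar>psi0 al y1 y0 (xi al x) - psi0 al y1 y0 y0\<bar> \<le> LL * \<bar>xi al x - y0\<bar>" by (rule psi0_lip)
    moreover have "\<bar>psi0 al y1 y0 al - psi0 al y1 y0 (xi al z)\<bar> \<le> LL * \<bar>al - xi al z\<bar>" by (rule psi0_lip)
    ultimately have "\<bar>psi0 al y1 y0 (xi al x) - psi0 al y1 y0 (xi al z)\<bar> \<le> LL * (\<bar>xi al x - y0\<bar> + \<bar>al - xi al z\<bar>)"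
      using psi0_al psi0_y0 by (simp add: algebra_simps)
    also have "\<bar>xi al x - y0\<bar> + \<bar>al - xi al z\<bar> = (y0 - xi al x) + (xi al z - al)"
      using rx rz per by simp
    also have "\<dots> \<le> \<bar>x - z\<bar>" using xx zz kk per xz by simp
    finally show ?thesis using LL_pos by (simp add: psi_def mult_left_mono)
  qed
qed

lemma psi_lip: "\<bar>psi al y1 y0 x - psi al y1 y0 z\<bar> \<le> LL * \<bar>x - z\<bar>"
proof (cases "x \<le> z")
  case True then show ?thesis using psi_lip_le by blast
next
  case False then show ?thesis using psi_lip_le[of z x] by (simp add: abs_minus_commute)
qed

lemma psi_cont: "continuous_on UNIV (psi al y1 y0)"
proof (rule lipschitz_on_continuous_on)
  show "LL-lipschitz_on UNIV (psi al y1 y0)"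
    by (rule lipschitz_onI) (use psi_lip LL_pos in \<open>auto simp: dist_real_def\<close>)
qed

lemma psi_deriv_base:
  assumes w: "al < w" "w < y0" "w \<noteq> y1"
  shows "(psi al y1 y0 has_real_derivative (if w < y1 then - cc else 1)) (at w)"
proof (cases "w < y1")
  case True
  have "((\<lambda>t. - cc * (t - al)) has_real_derivative - cc) (at w)"
    by (auto intro!: derivative_eq_intros)
  then have "(psi al y1 y0 has_real_derivative - cc) (at w)"
    by (rule has_field_derivative_transform_within_open[of _ _ _ "{al<..<y1}"])
       (use True w y10 in \<open>auto simp: psi_eq psi0_left\<close>)
  then show ?thesis using True by simp
next
  case False
  then have Tr: "y1 < w" using w by auto
  have "((\<lambda>t. t - y0) has_real_derivative 1) (at w)"
    by (auto intro!: derivative_eq_intros)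
  then have "(psi al y1 y0 has_real_derivative 1) (at w)"
    by (rule has_field_derivative_transform_within_open[of _ _ _ "{y1<..<y0}"])
       (use Tr w a1 in \<open>auto simp: psi_eq psi0_right\<close>)
  then show ?thesis using False by simp
qed

lemma psi_deriv:
  assumes "xi al x \<noteq> al" "xi al x \<noteq> y1"
  shows "\<exists>D. (psi al y1 y0 has_real_derivative D) (at x) \<and> \<bar>D\<bar> \<le> LL"
proof -
  obtain k where k: "x = xi al x + 2*pi * of_int k" using xi_decomp by blast
  define w where "w = xi al x"
  have w: "al < w" "w < y0" "w \<noteq> y1" using assms xi_range[of al x] per by (auto simp: w_def)
  define D where "D = (if w < y1 then - cc else 1)"
  have "(psi al y1 y0 has_real_derivative D) (at w)" using psi_deriv_base[OF w] by (simp add: D_def)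
  then have "((\<lambda>t. psi al y1 y0 (t + (- 2*pi * of_int k))) has_real_derivative D) (at (w + 2*pi * of_int k))"
    using DERIV_shift[of "psi al y1 y0" D "w + 2*pi * of_int k" "- 2*pi * of_int k"] by simp
  moreover have "(\<lambda>t. psi al y1 y0 (t + (- 2*pi * of_int k))) = psi al y1 y0"
    using psi_shift[of _ "-k"] by (simp add: fun_eq_iff)
  ultimately have "(psi al y1 y0 has_real_derivative D) (at x)" using k w_def by simp
  moreover have "\<bar>D\<bar> \<le> LL" using cc_pos by (auto simp: D_def LL_def)
  ultimately show ?thesis by blast
qed

lemma bad_set_countable: "countable {x. xi al x = al \<or> xi al x = y1}"
proof -
  have "{x. xi al x = al \<or> xi al x = y1} \<subseteq> (\<lambda>k::int. al + 2*pi * of_int k) ` UNIV \<union> (\<lambda>k::int. y1 + 2*pi * of_int k) ` UNIV"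
  proof
    fix x assume "x \<in> {x. xi al x = al \<or> xi al x = y1}"
    moreover obtain k where "x = xi al x + 2*pi * of_int k" using xi_decomp by blast
    ultimately show "x \<in> (\<lambda>k::int. al + 2*pi * of_int k) ` UNIV \<union> (\<lambda>k::int. y1 + 2*pi * of_int k) ` UNIV"
      by auto
  qed
  then show ?thesis by (rule countable_subset) auto
qed

end



lemma deriv_lip:
  assumes D: "\<And>x. (h has_real_derivative h' x) (at x)" and B: "\<And>x. \<bar>h' x\<bar> \<le> B"
  shows "\<bar>h x - h z\<bar> \<le> B * \<bar>x - z\<bar>"
proof -
  have le: "\<bar>h v - h u\<bar> \<le> B * \<bar>v - u\<bar>" if uv: "u < v" for u v
  proof -
    have c: "continuous_on {u..v} h" by (meson D DERIV_continuous continuous_at_imp_continuous_on)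
    obtain l w where lw: "u < w" "w < v" "DERIV h w :> l" "h v - h u = (v - u) * l"
      using MVT[OF uv c] D real_differentiable_def by blast
    have "l = h' w" using DERIV_unique[OF lw(3) D] .
    then have "\<bar>h v - h u\<bar> = \<bar>v - u\<bar> * \<bar>h' w\<bar>" using lw(4) by (simp add: abs_mult)
    also have "\<dots> \<le> \<bar>v - u\<bar> * B" using B by (intro mult_left_mono) auto
    finally show ?thesis by (simp add: mult.commute)
  qed
  show ?thesis
  proof (cases x z rule: linorder_cases)
    case less then show ?thesis using le[of x z] by (simp add: abs_minus_commute)
  next
    case equal then show ?thesis by simp
  next
    case greater then show ?thesis using le[of z x] by simp
  qed
qed

lemma F_side:
  assumes chain: "\<And>j x. j < m \<Longrightarrow> (Fl j has_real_derivative Fl (Suc j) x) (at x)"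
    and base: "\<And>z. \<bar>z - yc\<bar> \<le> d \<Longrightarrow> Lop d a 0 (Fl m) z = - K * (z - yc)"
    and a: "a > 0"
  shows "k \<le> m \<Longrightarrow> \<bar>z - yc\<bar> \<le> d - real k * a / 2 \<Longrightarrow> Lop d a k (Fl (m-k)) z = - K * a^k * (z - yc)"
proof (induction k arbitrary: z)
  case 0 then show ?case using base by simp
next
  case (Suc k)
  define G where "G = Fl (m - Suc k)"
  have e: "Suc (m - Suc k) = m - k" using Suc.prems by auto
  have dG: "(G has_real_derivative Fl (m - k) x) (at x)" for x
    using chain[of "m - Suc k" x] Suc.prems e by (simp add: G_def)
  have dL: "(Lop d a k G has_real_derivative Lop d a k (Fl (m - k)) x) (at x)" for x
    by (rule Lop_deriv[OF dG])
  define \<Phi> where "\<Phi> t = Lop d a k G t + K * a^k * (t - yc)^2 / 2" for t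
  have dP: "(\<Phi> has_real_derivative Lop d a k (Fl (m - k)) t + K * a^k * (t - yc)) (at t)" for t
    unfolding \<Phi>_def by (auto intro!: derivative_eq_intros dL simp: field_simps)
  have "\<Phi> (z + a/2) = \<Phi> (z - a/2)"
  proof (rule DERIV_isconst_end[of "z - a/2" "z + a/2" \<Phi>])
    show "z - a/2 < z + a/2" using a by simp
    show "continuous_on {z - a/2..z + a/2} \<Phi>" by (meson dP DERIV_continuous continuous_at_imp_continuous_on)
    fix t assume t: "z - a/2 < t" "t < z + a/2"
    have "\<bar>t - yc\<bar> \<le> d - real k * a / 2" using t Suc.prems by (auto simp: algebra_simps add_divide_distrib)
    then have "Lop d a k (Fl (m - k)) t = - K * a^k * (t - yc)" using Suc.IH Suc.prems by auto
    then show "(\<Phi> has_real_derivative 0) (at t)" using dP[of t] by simp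
  qed
  then have "Lop d a k G (z + a/2) - Lop d a k G (z - a/2) =
      K * a^k * ((z - a/2 - yc)^2 - (z + a/2 - yc)^2) / 2"
    by (simp add: \<Phi>_def algebra_simps add_divide_distrib)
  also have "\<dots> = - K * a^Suc k * (z - yc)" by (simp add: power2_eq_square field_simps)
  finally show ?case by (simp add: G_def)
qed

lemma y_mono:
  fixes y :: "nat \<Rightarrow> real"
  assumes "\<forall>i<N. y (Suc i) < y i"
  shows "i < j \<Longrightarrow> j \<le> N \<Longrightarrow> y j < y i"
proof (induction j)
  case 0 then show ?case by simp
next
  case (Suc j)
  show ?case
  proof (cases "i = j")
    case True then show ?thesis using assms Suc.prems by auto
  next
    case False
    then have "y j < y i" using Suc by auto
    moreover have "y (Suc j) < y j" using assms Suc.prems by auto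
    ultimately show ?thesis by simp
  qed
qed



lemma cont_of_deriv: "(\<And>x. (H has_real_derivative H' x) (at x)) \<Longrightarrow> continuous_on S H"
  by (meson DERIV_continuous continuous_at_imp_continuous_on)

lemma T_side:
  fixes y :: "nat \<Rightarrow> real"
  assumes Dq: "Delta_q q s y T" and tp: "trig_poly n T" and q: "q \<ge> 3" and s: "s \<ge> 1"
    and y10: "y 1 < y 0" and y21: "y 2 < y 1"
    and d: "d > 0" and d1: "y 1 + 3*d < y 0" and d2: "y 2 < y 1 - 3*d"
    and a: "a \<ge> 0" and pa: "real (q-2) * a \<le> 2*d"
  shows "Lop d a (q-2) T (y 1) \<ge> 0"
proof -
  define p where "p = q - 2"
  obtain ca cb where T: "T = TD ca cb n 0" using TD_0[OF tp] by blast
  define D where "D = TD ca cb n"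
  have Dd: "\<And>j x. (D j has_real_derivative D (Suc j) x) (at x)" unfolding D_def by (rule TD_deriv)
  have Dc: "continuous_on S (D j)" for S j using cont_of_deriv[OF Dd] .
  have i1: "q_monotone q (y 1) (y 0) (\<lambda>x. T x)"
  proof -
    have "(1::nat) \<in> {1 .. 2 * s}" using s by auto
    then have "q_monotone q (y 1) (y (1-1)) (\<lambda>x. (-1) ^ (1 - 1) * T x)"
      using Dq unfolding Delta_q_def by blast
    then show ?thesis by simp
  qed
  then obtain g1 where g1: "deriv_chain p {y 1<..<y 0} (\<lambda>x. T x) g1" "convex_on {y 1<..<y 0} (g1 p)"
    unfolding q_monotone_def p_def by blast
  have "g1 p x = D p x" if "x \<in> {y 1<..<y 0}" for x
    by (rule chain_id[OF g1(1), of D]) (use that Dd T D_def in auto)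
  then have "convex_on {y 1<..<y 0} (D p)"
    using convex_on_eq[OF g1(2)] by auto
  then have "convex_on {y 1..y 0} (D p)" using convex_on_closed[OF y10 _ Dc] by blast
  then have cv: "convex_on {y 1..y 1 + 3*d} (D p)" by (rule convex_on_subset) (use d1 in auto)
  have i2: "q_monotone q (y 2) (y 1) (\<lambda>x. - T x)"
  proof -
    have "(2::nat) \<in> {1 .. 2 * s}" using s by auto
    then have "q_monotone q (y 2) (y (2-1)) (\<lambda>x. (-1) ^ (2 - 1) * T x)"
      using Dq unfolding Delta_q_def by blast
    then show ?thesis by simp
  qed
  then obtain g2 where g2: "deriv_chain p {y 2<..<y 1} (\<lambda>x. - T x) g2" "convex_on {y 2<..<y 1} (g2 p)"
    unfolding q_monotone_def p_def by blast
  have Dd': "\<And>j x. ((\<lambda>x. - D j x) has_real_derivative - D (Suc j) x) (at x)"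
    using Dd by (auto intro: DERIV_minus)
  have "g2 p x = - D p x" if "x \<in> {y 2<..<y 1}" for x
    by (rule chain_id[OF g2(1), of "\<lambda>j x. - D j x"]) (use that Dd' T D_def in auto)
  then have "convex_on {y 2<..<y 1} (\<lambda>x. - D p x)"
    using convex_on_eq[OF g2(2)] by auto
  moreover have "continuous_on {y 2..y 1} (\<lambda>x. - D p x)" using Dc by (auto intro: continuous_intros)
  ultimately have "convex_on {y 2..y 1} (\<lambda>x. - D p x)" using convex_on_closed[OF y21] by blast
  then have "convex_on {y 1 - 3*d..y 1} (\<lambda>x. - D p x)" by (rule convex_on_subset) (use d2 in auto)
  then have cc: "concave_on {y 1 - 3*d..y 1} (D p)" by (simp add: concave_on_def)
  have claim: "k \<le> p \<Longrightarrow> \<bar>t\<bar> \<le> d - real k * a / 2 \<Longrightarrow>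
      Lop d a k (D (p-k)) (y 1 + t) + Lop d a k (D (p-k)) (y 1 - t) \<ge> 0" for k t
  proof (induction k arbitrary: t)
    case 0
    then show ?case using base_T[OF cv cc d] by auto
  next
    case (Suc k)
    have e: "Suc (p - Suc k) = p - k" using Suc.prems by auto
    show ?case
    proof (rule step_T[of _ "D (p - k)"])
      show "(D (p - Suc k) has_real_derivative D (p - k) x) (at x)" for x using Dd[of "p - Suc k"] e by simp
      show "a \<ge> 0" using a .
      show "\<And>t. \<bar>t\<bar> \<le> d - real k * a / 2 \<Longrightarrow> 0 \<le> Lop d a k (D (p - k)) (y 1 + t) + Lop d a k (D (p - k)) (y 1 - t)"
        using Suc by auto
      show "\<bar>t\<bar> \<le> d - real k * a / 2 - a / 2" using Suc.prems by (simp add: algebra_simps add_divide_distrib)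
    qed
  qed
  have "Lop d a p (D 0) (y 1 + 0) + Lop d a p (D 0) (y 1 - 0) \<ge> 0"
    using claim[of p 0] pa by (simp add: p_def)
  then show ?thesis using T D_def p_def by simp
qed



theorem corollary1p4:
  fixes q r s :: nat and y :: "nat \<Rightarrow> real"
  assumes "q \<ge> 3" and "r \<ge> 1" and "r \<le> q - 2" and "s \<ge> 1"
    and "\<forall>i<2 * s. y (Suc i) < y i"
    and "y 0 = y (2 * s) + 2 * pi"
  shows "\<exists>f. Delta_q q s y f \<and> W_class r f \<and>
           (\<exists>C>0. \<forall>n\<ge>1. E_q n q s y f \<ge> C)"
proof -
  define p where "p = q - 2"
  have p1: "p \<ge> 1" using assms(1) by (simp add: p_def)
  have rp: "r \<le> p" using assms(3) by (simp add: p_def)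
  have ymono: "\<And>i j. i < j \<Longrightarrow> j \<le> 2 * s \<Longrightarrow> y j < y i" using y_mono[OF assms(5)] by blast
  have ymono': "\<And>i j. i \<le> j \<Longrightarrow> j \<le> 2 * s \<Longrightarrow> y j \<le> y i"
    by (metis ymono order_le_less order_refl)
  define al where "al = y (2 * s)"
  have y10: "y 1 < y 0" using ymono[of 0 1] assms(4) by simp
  have y21: "y 2 < y 1" using ymono[of 1 2] assms(4) by simp
  have al2: "al \<le> y 2" using ymono'[of 2 "2 * s"] assms(4) by (simp add: al_def)
  have a1: "al < y 1" using al2 y21 by simp
  have per: "y 0 = al + 2*pi" using assms(6) al_def by simp
  interpret P: psi_setup al "y 1" "y 0" by unfold_locales (use a1 y10 per in auto)
  obtain F c0 where F: "F (p-1) = (\<lambda>x. psi al (y 1) (y 0) x + c0)"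
      "\<forall>j<p-1. \<forall>x. (F j has_real_derivative F (Suc j) x) (at x)"
      "\<forall>j\<le>p-1. periodic_2pi (F j) \<and> continuous_on UNIV (F j)"
    using chain_exists[OF P.psi_cont P.psi_periodic, of "p-1"] by blast
  have "\<forall>j\<in>{..p-1}. \<exists>M. \<forall>x. \<bar>F j x\<bar> \<le> M" using F(3) periodic_bounded by auto
  then obtain Mf where Mf: "\<And>j x. j \<in> {..p-1} \<Longrightarrow> \<bar>F j x\<bar> \<le> Mf j" by metis
  define M where "M = (\<Sum>j\<le>p-1. \<bar>Mf j\<bar>)"
  have M0: "M \<ge> 0" by (simp add: M_def sum_nonneg)
  have M: "\<bar>F j x\<bar> \<le> M" if "j \<le> p-1" for j x
  proof -
    have "\<bar>F j x\<bar> \<le> \<bar>Mf j\<bar>" using Mf[of j x] that by auto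
    also have "\<dots> \<le> M" unfolding M_def by (rule member_le_sum) (use that in auto)
    finally show ?thesis .
  qed
  define lam where "lam = 1 / (M + P.LL)"
  have LLp: "P.LL \<ge> 1" by (rule P.LL_pos)
  have lam0: "lam > 0" using M0 LLp by (simp add: lam_def)
  have lamM: "lam * M \<le> 1" using M0 LLp by (simp add: lam_def field_simps)
  have lamL: "lam * P.LL \<le> 1" using M0 LLp by (simp add: lam_def field_simps)
  define Fl where "Fl j x = lam * F j x" for j x
  define f where "f = Fl 0"
  have Fl_chain: "(Fl j has_real_derivative Fl (Suc j) x) (at x)" if "j < p - 1" for j x
    unfolding Fl_def using F(2) that by (auto intro!: derivative_eq_intros)
  have Fl_per: "periodic_2pi (Fl j)" "continuous_on UNIV (Fl j)" if "j \<le> p - 1" for j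
    using F(3) that by (auto simp: Fl_def periodic_2pi_def intro!: continuous_intros)
  have Fl_top: "Fl (p-1) x = lam * psi al (y 1) (y 0) x + lam * c0" for x
    using F(1) by (simp add: Fl_def algebra_simps)
  have Fl_bd: "\<bar>Fl j x\<bar> \<le> 1" if "j \<le> p - 1" for j x
  proof -
    have "\<bar>Fl j x\<bar> = lam * \<bar>F j x\<bar>" using lam0 by (simp add: Fl_def abs_mult)
    also have "\<dots> \<le> lam * M" using M[OF that] lam0 by (intro mult_left_mono) auto
    finally show ?thesis using lamM by simp
  qed
  have fc: "continuous_on UNIV f" and fp: "periodic_2pi f" using Fl_per[of 0] by (auto simp: f_def)

  have Df: "Delta_q q s y f"
    unfolding Delta_q_def
  proof (intro conjI ballI)
    show "continuous_on UNIV f" by (rule fc)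
    show "periodic_2pi f" by (rule fp)
    fix i assume i: "i \<in> {1 .. 2 * s}"
    define sl where "sl = (if i = 1 then 1 else - P.cc)"
    define S where "S = {y i<..<y (i-1)}"
    have Ssub: "al < x \<and> x < y 0 \<and> x \<noteq> y 1 \<and> (x < y 1 \<longleftrightarrow> i \<noteq> 1)" if "x \<in> S" for x
    proof (cases "i = 1")
      case True then show ?thesis using that a1 by (auto simp: S_def)
    next
      case False
      then have i2: "i \<ge> 2" "i \<le> 2 * s" using i by auto
      have "y (i-1) \<le> y 1" using ymono'[of 1 "i-1"] i2 by auto
      moreover have "al \<le> y i" using ymono'[of i "2 * s"] i2 by (auto simp: al_def)
      ultimately show ?thesis using that False y10 by (auto simp: S_def)
    qed
    have dpsi: "(psi al (y 1) (y 0) has_real_derivative sl) (at x)" if "x \<in> S" for x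
      using P.psi_deriv_base[of x] Ssub[OF that] by (auto simp: sl_def)
    define g where "g j x = (if j < p then (-1)^(i-1) * Fl j x else (-1)^(i-1) * lam * sl)" for j x
    show "q_monotone q (y i) (y (i-1)) (\<lambda>x. (-1)^(i-1) * f x)"
      unfolding q_monotone_def
    proof (intro conjI exI)
      show "continuous_on {y i..y (i-1)} (\<lambda>x. (-1)^(i-1) * f x)"
        using fc by (auto intro!: continuous_intros intro: continuous_on_subset)
      show "deriv_chain (q-2) {y i<..<y (i-1)} (\<lambda>x. (-1)^(i-1) * f x) g"
        unfolding deriv_chain_def p_def[symmetric] S_def[symmetric]
      proof (intro conjI ballI allI impI)
        fix x assume "x \<in> S"
        show "g 0 x = (-1)^(i-1) * f x" using p1 by (simp add: g_def f_def)
      next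
        fix j x assume j: "j < p" and x: "x \<in> S"
        show "(g j has_real_derivative g (Suc j) x) (at x)"
        proof (cases "Suc j < p")
          case True
          then have "((\<lambda>x. (-1)^(i-1) * Fl j x) has_real_derivative (-1)^(i-1) * Fl (Suc j) x) (at x)"
            using Fl_chain[of j x] by (auto intro!: derivative_eq_intros)
          moreover have "g j = (\<lambda>x. (-1)^(i-1) * Fl j x)" using j by (simp add: g_def fun_eq_iff)
          ultimately show ?thesis using True by (simp add: g_def)
        next
          case False
          then have jp: "j = p - 1" "Suc j = p" using j by auto
          have "g j = (\<lambda>x. (-1)^(i-1) * (lam * psi al (y 1) (y 0) x + lam * c0))"
            using j jp Fl_top by (simp add: g_def fun_eq_iff)
          moreover have "((\<lambda>x. (-1)^(i-1) * (lam * psi al (y 1) (y 0) x + lam * c0)) has_real_derivative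
              (-1)^(i-1) * (lam * sl)) (at x)"
            using dpsi[OF x] by (auto intro!: derivative_eq_intros)
          ultimately show ?thesis using jp by (simp add: g_def mult.assoc)
        qed
      next
        show "continuous_on S (g p)" by (simp add: g_def)
      qed
      show "convex_on {y i<..<y (i-1)} (g (q-2))"
      proof -
        have "g p = (\<lambda>x. (-1)^(i-1) * lam * sl)" by (simp add: g_def fun_eq_iff)
        then show ?thesis by (simp add: p_def[symmetric] convex_on_const)
      qed
    qed
  qed

  have Wf: "W_class r f"
    unfolding W_class_def
  proof (intro conjI)
    show "periodic_2pi f" by (rule fp)
    show "\<exists>g. (\<forall>x. g 0 x = f x) \<and> (\<forall>j<r - 1. \<forall>x. (g j has_real_derivative g (Suc j) x) (at x)) \<and>
        locally_abs_cont (g (r - 1)) \<and>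
        (AE x in lborel. \<exists>D. (g (r - 1) has_real_derivative D) (at x) \<and> \<bar>D\<bar> \<le> 2)"
    proof (rule exI[of _ Fl], intro conjI allI impI)
      show "Fl 0 x = f x" for x by (simp add: f_def)
      show "(Fl j has_real_derivative Fl (Suc j) x) (at x)" if "j < r - 1" for j x
        using Fl_chain that rp by simp
      show "locally_abs_cont (Fl (r - 1))"
      proof (cases "r - 1 < p - 1")
        case True
        have "\<bar>Fl (r-1) x - Fl (r-1) z\<bar> \<le> 1 * \<bar>x - z\<bar>" for x z
        proof (rule deriv_lip)
          show "(Fl (r-1) has_real_derivative Fl (Suc (r-1)) x) (at x)" for x using Fl_chain True by simp
          show "\<bar>Fl (Suc (r-1)) x\<bar> \<le> 1" for x using Fl_bd True by simp
        qed
        then show ?thesis by (intro lipschitz_abs_cont[of _ 1]) auto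
      next
        case False
        then have rr: "r - 1 = p - 1" using rp by simp
        have "\<bar>Fl (r-1) x - Fl (r-1) z\<bar> \<le> 1 * \<bar>x - z\<bar>" for x z
        proof -
          have "\<bar>Fl (r-1) x - Fl (r-1) z\<bar> = lam * \<bar>psi al (y 1) (y 0) x - psi al (y 1) (y 0) z\<bar>"
            unfolding rr Fl_top using lam0 by (simp add: abs_mult flip: right_diff_distrib)
          also have "\<dots> \<le> lam * (P.LL * \<bar>x - z\<bar>)" using P.psi_lip lam0 by (intro mult_left_mono) auto
          also have "\<dots> \<le> 1 * \<bar>x - z\<bar>" using mult_right_mono[OF lamL, of "\<bar>x - z\<bar>"] by (simp add: mult.assoc)
          finally show ?thesis .
        qed
        then show ?thesis by (intro lipschitz_abs_cont[of _ 1]) auto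
      qed
      show "AE x in lborel. \<exists>D. (Fl (r - 1) has_real_derivative D) (at x) \<and> \<bar>D\<bar> \<le> 2"
      proof (cases "r - 1 < p - 1")
        case True
        have "\<exists>D. (Fl (r - 1) has_real_derivative D) (at x) \<and> \<bar>D\<bar> \<le> 2" for x
          using Fl_chain[of "r-1" x] Fl_bd[of "Suc (r-1)" x] True by force
        then show ?thesis by simp
      next
        case False
        then have rr: "r - 1 = p - 1" using rp by simp
        show ?thesis
        proof (rule AE_I')
          show "{x. xi al x = al \<or> xi al x = y 1} \<in> null_sets lborel"
            by (rule countable_imp_null_set_lborel[OF P.bad_set_countable])
          show "{x \<in> space lborel. \<not> (\<exists>D. (Fl (r - 1) has_real_derivative D) (at x) \<and> \<bar>D\<bar> \<le> 2)}
              \<subseteq> {x. xi al x = al \<or> xi al x = y 1}"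
          proof (rule subsetI, rule ccontr)
            fix x assume x: "x \<in> {x \<in> space lborel. \<not> (\<exists>D. (Fl (r - 1) has_real_derivative D) (at x) \<and> \<bar>D\<bar> \<le> 2)}"
              and nx: "x \<notin> {x. xi al x = al \<or> xi al x = y 1}"
            obtain D where D: "(psi al (y 1) (y 0) has_real_derivative D) (at x)" "\<bar>D\<bar> \<le> P.LL"
              using P.psi_deriv nx by blast
            have "(Fl (r-1) has_real_derivative lam * D) (at x)"
              unfolding rr Fl_top[abs_def] using D(1) by (auto intro!: derivative_eq_intros)
            moreover have "\<bar>lam * D\<bar> \<le> 2"
            proof -
              have "\<bar>lam * D\<bar> = lam * \<bar>D\<bar>" using lam0 by (simp add: abs_mult)
              also have "\<dots> \<le> lam * P.LL" using D(2) lam0 by (intro mult_left_mono) auto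
              finally show ?thesis using lamL by simp
            qed
            ultimately show False using x by blast
          qed
        qed
      qed
    qed
  qed

  define mm where "mm = min (y 0 - y 1) (y 1 - y 2)"
  define d where "d = mm / 4"
  define a where "a = 2 * d / real p"
  have d0: "d > 0" using y10 y21 by (simp add: d_def mm_def)
  have m1: "mm \<le> y 0 - y 1" "mm \<le> y 1 - y 2" "mm > 0" using y10 y21 by (auto simp: mm_def)
  have d1: "y 1 + 3*d < y 0" using m1 unfolding d_def by linarith
  have d2: "y 2 < y 1 - 3*d" using m1 unfolding d_def by linarith
  have a0: "a > 0" using d0 p1 by (simp add: a_def)
  have pa: "real p * a = 2 * d" using p1 by (simp add: a_def)
  define K where "K = lam * (1 + P.cc)"
  have K0: "K > 0" using lam0 P.cc_pos by (simp add: K_def)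
  have Fl_loc: "Fl (p-1) t = lam * psi0 al (y 1) (y 0) t + lam * c0" if "al \<le> t" "t \<le> y 0" for t
    using Fl_top P.psi_eq that by simp
  have base: "Lop d a 0 (Fl (p-1)) z = - K * (z - y 1)" if z: "\<bar>z - y 1\<bar> \<le> d" for z
  proof -
    have r1: "Fl (p-1) (z + 2*d) = lam * (z + 2*d - y 0) + lam * c0"
      using Fl_loc[of "z + 2*d"] P.psi0_right[of "z + 2*d"] z d0 d1 a1 by (simp add: abs_le_iff)
    have r2: "Fl (p-1) (z + d) = lam * (z + d - y 0) + lam * c0"
      using Fl_loc[of "z + d"] P.psi0_right[of "z + d"] z d0 d1 a1 by (simp add: abs_le_iff)
    have l1: "Fl (p-1) (z - d) = lam * (- P.cc * (z - d - al)) + lam * c0"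
      using Fl_loc[of "z - d"] P.psi0_left[of "z - d"] z d0 d2 al2 y10 by (simp add: abs_le_iff)
    have l2: "Fl (p-1) (z - 2*d) = lam * (- P.cc * (z - 2*d - al)) + lam * c0"
      using Fl_loc[of "z - 2*d"] P.psi0_left[of "z - 2*d"] z d0 d2 al2 y10 by (simp add: abs_le_iff)
    have "Lop d a 0 (Fl (p-1)) z = lam * ((y 0 - z) - P.cc * (z - al))"
      using r1 r2 l1 l2 by (simp add: algebra_simps)
    also have "\<dots> = lam * ((y 0 - y 1) - (z - y 1) - P.cc * (z - y 1) - P.cc * (y 1 - al))"
      by (simp add: algebra_simps)
    also have "\<dots> = lam * (P.cc * (y 1 - al) - (z - y 1) - P.cc * (z - y 1) - P.cc * (y 1 - al))"
      using P.cc_y1 by simp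
    also have "\<dots> = - K * (z - y 1)" by (simp add: K_def algebra_simps)
    finally show ?thesis .
  qed
  have Fs: "Lop d a k (Fl (p-1-k)) z = - K * a^k * (z - y 1)"
    if "k \<le> p-1" "\<bar>z - y 1\<bar> \<le> d - real k * a / 2" for k z
    by (rule F_side[where m="p-1" and Fl=Fl and yc="y 1" and d=d and a=a and K=K, OF _ base a0]) (use Fl_chain that in auto)
  have Lf: "Lop d a p f (y 1) = - K * a^p"
  proof -
    have pp: "p = Suc (p-1)" using p1 by simp
    have ff: "f = Fl (p - 1 - (p - 1))" by (simp add: f_def)
    have bnd: "\<bar>a/2\<bar> \<le> d - real (p-1) * a / 2"
    proof -
      have "real (p-1) * a / 2 + a / 2 = real p * a / 2" using p1 by (simp add: of_nat_diff field_simps)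
      then show ?thesis using pa a0 by simp
    qed
    have "Lop d a p f (y 1) = Lop d a (p-1) f (y 1 + a/2) - Lop d a (p-1) f (y 1 - a/2)"
      by (subst pp) simp
    also have "\<dots> = - K * (a^(p-1) * a)"
    proof -
      have e1: "Lop d a (p-1) f (y 1 + a/2) = - K * a^(p-1) * (y 1 + a/2 - y 1)"
        using Fs[of "p-1" "y 1 + a/2"] bnd ff by simp
      have e2: "Lop d a (p-1) f (y 1 - a/2) = - K * a^(p-1) * (y 1 - a/2 - y 1)"
        using Fs[of "p-1" "y 1 - a/2"] bnd ff by simp
      show ?thesis unfolding e1 e2 by (simp add: field_simps)
    qed
    also have "a^(p-1) * a = a^p" using pp by (metis power_Suc2)
    finally show ?thesis by simp
  qed
  define C where "C = K * a^p / (6 * 2^p)"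
  have C0: "C > 0" using K0 a0 by (simp add: C_def)
  have bound: "C \<le> sup_norm (\<lambda>x. f x - T x)" if T: "trig_poly n T" "Delta_q q s y T" for n T
  proof -
    have LT: "Lop d a p T (y 1) \<ge> 0"
      using T_side[OF T(2) T(1) assms(1) assms(4) y10 y21 d0 d1 d2] a0 pa by (simp add: p_def)
    have Tc: "continuous_on UNIV T" "periodic_2pi T" using T(2) by (auto simp: Delta_q_def)
    have "continuous_on UNIV (\<lambda>x. f x - T x)" using fc Tc by (auto intro!: continuous_intros)
    moreover have "periodic_2pi (\<lambda>x. f x - T x)" using fp Tc by (simp add: periodic_2pi_def)
    ultimately obtain B where B: "\<And>x. \<bar>f x - T x\<bar> \<le> B" using periodic_bounded by blast
    have bdd: "bdd_above (range (\<lambda>x. \<bar>f x - T x\<bar>))" using B by (intro bdd_aboveI[of _ B]) auto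
    have le: "\<bar>f x - T x\<bar> \<le> sup_norm (\<lambda>x. f x - T x)" for x
      unfolding sup_norm_def by (rule cSup_upper[OF _ bdd]) auto
    have "\<bar>Lop d a p (\<lambda>x. f x - T x) (y 1)\<bar> \<le> 6 * 2^p * sup_norm (\<lambda>x. f x - T x)"
      by (rule Lop_bound) (rule le)
    moreover have "Lop d a p (\<lambda>x. f x - T x) (y 1) = Lop d a p f (y 1) - Lop d a p T (y 1)"
      by (rule Lop_diff)
    ultimately have "K * a^p \<le> 6 * 2^p * sup_norm (\<lambda>x. f x - T x)" using Lf LT by simp
    then show ?thesis by (simp add: C_def field_simps)
  qed
  have "E_q n q s y f \<ge> C" for n
    unfolding E_q_def
  proof (rule cInf_greatest)
    have "trig_poly n (\<lambda>x. 0)" unfolding trig_poly_def by (rule exI[of _ "\<lambda>_. 0"], rule exI[of _ "\<lambda>_. 0"]) simp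
    moreover have "Delta_q q s y (\<lambda>x. 0)"
      unfolding Delta_q_def q_monotone_def
    proof (intro conjI ballI exI)
      show "deriv_chain (q - 2) {y i<..<y (i - 1)} (\<lambda>x. (-1) ^ (i - 1) * 0) (\<lambda>j x. 0)" for i
        by (simp add: deriv_chain_def)
    qed (auto simp: periodic_2pi_def convex_on_const)
    ultimately show "{sup_norm (\<lambda>x. f x - T x) |T. trig_poly n T \<and> Delta_q q s y T} \<noteq> {}" by blast
  next
    fix v assume "v \<in> {sup_norm (\<lambda>x. f x - T x) |T. trig_poly n T \<and> Delta_q q s y T}"
    then show "C \<le> v" using bound by blast
  qed
  then show ?thesis using Df Wf C0 by blast
qed


end
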